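(* Let $m,k,n\ge 1$ be integers; let $\lambda_i,\mu_i>0$ for $i\in\{1,\dots,k\}$ and $\alpha_j,\beta_j,u_j,v_j>0$ for $j\in\{1,\dots,n\}$; and let $\theta:\{0,\dots,m\}\to\mathbb{R}$ satisfy $0\le\theta(b)\le 1$ for all $b$, $\theta(b)>0$ for $b\in\{0,\dots,m-1\}$, and $\theta(m)=0$. Let $\mathcal{S}$ be the set of vectors $w=(x;a)=(x_1,\dots,x_k;a_1,\dots,a_n)$ with $x_i\in\mathbb{Z}_{\ge0}$, $a_j\in\{I,W,T\}$, and $\mathrm{busy}(w):=\sum_{i=1}^k x_i+\sum_{j=1}^n 1_{\{a_j=T\}}\le m$. Consider the CTMC on $\mathcal{S}$ whose only nonzero transition rates between states in $\mathcal{S}$ are: (i) $(x;a)\to(x+e_i;a)$ with rate $\lambda_i\theta(\mathrm{busy}(x;a))$ and $(x+e_i;a)\to(x;a)$ with rate $(x_i+1)\mu_i$, for each $i\in\{1,\dots,k\}$ ($e_i$ the $i$-th unit vector of length $k$); (ii) for each $j\in\{1,\dots,n\}$, changing only coordinate $a_j$: $I\to W$ with rate $\alpha_j$, $W\to I$ with rate $\beta_j$, $W\to T$ with rate $u_j\theta(\mathrm{busy}(w))$ where $w$ is the state before the transition, and $T\to W$ with rate $v_j$. Let $\rho_i=\lambda_i/\mu_i$. Then this CTMC is reversible and its steady state distribution is $$p(w)=B\cdot\Big(\prod_{r=0}^{\mathrm{busy}(w)-1}\theta(r)\Big)\Big(\prod_{i=1}^k\frac{\rho_i^{x_i}}{x_i!}\Big)\prod_{j=1}^n\Big(\frac{\alpha_j}{\beta_j}\Big)^{1_{\{a_j=W\}}}\Big(\frac{\alpha_ju_j}{\beta_jv_j}\Big)^{1_{\{a_j=T\}}}\qquad\forall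 w\in\mathcal{S},$$ where $B$ is the constant making the probabilities sum to $1$ and $\prod_{r=0}^{-1}\theta(r)=1$.
   Context: This models an access point with $m$ channels, $k$ classes of non-persistent users ($x_i$ = number of class $i$ users transmitting) and $n$ persistent users, each in activity state Idle ($I$), Waiting ($W$) or Transmitting ($T$); an access attempt made when $b$ channels are busy succeeds with probability $\theta(b)$. A CTMC is reversible if there is a probability mass function $p$ with $p(w)q_{w,z}=p(z)q_{z,w}$ for all states $w,z$. *)

theory Defs
  imports Complex_Main
begin

datatype act = Idle | Waiting | Transmitting

text \<open>A state w = (x; a): x i is the number of transmitting class-i users (i in 1..k),
  a j the activity of persistent user j (j in 1..n). Outside these index ranges the
  components are fixed to 0 resp. Idle, so that states are canonical.\<close>
type_synonym state = "(nat \<Rightarrow> nat) \<times> (nat \<Rightarrow> act)"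

definition busy :: "nat \<Rightarrow> nat \<Rightarrow> state \<Rightarrow> nat" where
  "busy k n w = (\<Sum>i=1..k. fst w i) + card {j\<in>{1..n}. snd w j = Transmitting}"

definition states :: "nat \<Rightarrow> nat \<Rightarrow> nat \<Rightarrow> state set" where
  "states m k n = {w. (\<forall>i. i \<notin> {1..k} \<longrightarrow> fst w i = 0) \<and>
                      (\<forall>j. j \<notin> {1..n} \<longrightarrow> snd w j = Idle) \<and> busy k n w \<le> m}"

definition up :: "nat \<Rightarrow> state \<Rightarrow> state" where
  "up i w = ((fst w)(i := fst w i + 1), snd w)"

definition setact :: "nat \<Rightarrow> act \<Rightarrow> state \<Rightarrow> state" where
  "setact j c w = (fst w, (snd w)(j := c))"

text \<open>Off-diagonal transition rate from w to z (only meaningful for w \<noteq> z).\<close>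
definition rate ::
  "nat \<Rightarrow> nat \<Rightarrow> (nat \<Rightarrow> real) \<Rightarrow> (nat \<Rightarrow> real) \<Rightarrow> (nat \<Rightarrow> real) \<Rightarrow> (nat \<Rightarrow> real) \<Rightarrow>
   (nat \<Rightarrow> real) \<Rightarrow> (nat \<Rightarrow> real) \<Rightarrow> (nat \<Rightarrow> real) \<Rightarrow> state \<Rightarrow> state \<Rightarrow> real" where
  "rate k n theta lam mu alpha beta u v w z =
     (\<Sum>i=1..k. (if z = up i w then lam i * theta (busy k n w) else 0)
              + (if w = up i z then real (fst w i) * mu i else 0))
   + (\<Sum>j=1..n.
        (if snd w j = Idle \<and> z = setact j Waiting w then alpha j else 0)
      + (if snd w j = Waiting \<and> z = setact j Idle w then beta j else 0)
      + (if snd w j = Waiting \<and> z = setact j Transmitting w then u j * theta (busy k n w) else 0)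
      + (if snd w j = Transmitting \<and> z = setact j Waiting w then v j else 0))"

definition is_pmf_on :: "'s set \<Rightarrow> ('s \<Rightarrow> real) \<Rightarrow> bool" where
  "is_pmf_on S p \<longleftrightarrow> (\<forall>w\<in>S. 0 \<le> p w) \<and> (\<Sum>w\<in>S. p w) = 1"

definition detailed_balance :: "'s set \<Rightarrow> ('s \<Rightarrow> 's \<Rightarrow> real) \<Rightarrow> ('s \<Rightarrow> real) \<Rightarrow> bool" where
  "detailed_balance S q p \<longleftrightarrow> (\<forall>w\<in>S. \<forall>z\<in>S. p w * q w z = p z * q z w)"

definition reversible_ctmc :: "'s set \<Rightarrow> ('s \<Rightarrow> 's \<Rightarrow> real) \<Rightarrow> bool" where
  "reversible_ctmc S q \<longleftrightarrow> (\<exists>p. is_pmf_on S p \<and> detailed_balance S q p)"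

definition stationary_dist :: "'s set \<Rightarrow> ('s \<Rightarrow> 's \<Rightarrow> real) \<Rightarrow> ('s \<Rightarrow> real) \<Rightarrow> bool" where
  "stationary_dist S q p \<longleftrightarrow> is_pmf_on S p \<and>
     (\<forall>z\<in>S. (\<Sum>w\<in>S-{z}. p w * q w z) = p z * (\<Sum>y\<in>S-{z}. q z y))"

definition weight ::
  "nat \<Rightarrow> nat \<Rightarrow> (nat \<Rightarrow> real) \<Rightarrow> (nat \<Rightarrow> real) \<Rightarrow> (nat \<Rightarrow> real) \<Rightarrow> (nat \<Rightarrow> real) \<Rightarrow>
   (nat \<Rightarrow> real) \<Rightarrow> (nat \<Rightarrow> real) \<Rightarrow> (nat \<Rightarrow> real) \<Rightarrow> state \<Rightarrow> real" where
  "weight k n theta lam mu alpha beta u v w =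
     (\<Prod>r<busy k n w. theta r)
   * (\<Prod>i=1..k. (lam i / mu i) ^ fst w i / fact (fst w i))
   * (\<Prod>j=1..n. (alpha j / beta j) ^ (if snd w j = Waiting then 1 else 0)
               * ((alpha j * u j) / (beta j * v j)) ^ (if snd w j = Transmitting then 1 else 0))"

end

theory Submission
  imports Defs
begin


lemma sum_upd_nat: "finite A \<Longrightarrow> i \<in> A \<Longrightarrow> sum (f(i:=c)) A + f i = sum f A + (c::nat)"
proof -
  assume a: "finite A" "i \<in> A"
  have "sum (f(i:=c)) (A - {i}) = sum f (A - {i})" by (rule sum.cong) auto
  then show ?thesis using sum.remove[OF a, of "f(i:=c)"] sum.remove[OF a, of f] by simp
qed

lemma prod_upd_real: "finite A \<Longrightarrow> i \<in> A \<Longrightarrow> (\<forall>x\<in>A-{i}. G x = F x) \<Longrightarrow> prod G A = G i * prod F (A - {i})"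
proof -
  assume a: "finite A" "i \<in> A" and e: "\<forall>x\<in>A-{i}. G x = F x"
  have "prod G (A - {i}) = prod F (A - {i})" using e by (intro prod.cong) auto
  then show ?thesis using prod.remove[OF a, of G] by simp
qed

lemma card_tf: "finite A \<Longrightarrow> card {j\<in>A. P j} = (\<Sum>j\<in>A. if P j then 1 else 0::nat)"
  using sum.inter_filter[of A "\<lambda>_. 1::nat" P] by simp

lemma busy_alt: "busy k n w = (\<Sum>i=1..k. fst w i) + (\<Sum>j\<in>{1..n}. if snd w j = Transmitting then 1 else 0)"
  unfolding busy_def by (subst card_tf) auto

lemma busy_up: "i \<in> {1..k} \<Longrightarrow> busy k n (up i w) = Suc (busy k n w)"
  unfolding busy_def up_def using sum_upd_nat[of "{1..k}" i "fst w" "fst w i + 1"] by simp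

lemma busy_setact: "j \<in> {1..n} \<Longrightarrow> busy k n (setact j c w) + (if snd w j = Transmitting then 1 else 0)
   = busy k n w + (if c = Transmitting then 1 else 0)"
proof -
  assume j: "j \<in> {1..n}"
  let ?t = "\<lambda>a. if a = Transmitting then 1 else (0::nat)"
  have e: "(\<lambda>ja. ?t (snd (setact j c w) ja)) = (\<lambda>ja. ?t (snd w ja))(j := ?t c)"
    by (auto simp: setact_def)
  have f: "fst (setact j c w) = fst w" by (simp add: setact_def)
  show ?thesis unfolding busy_alt f e
    using sum_upd_nat[of "{1..n}" j "\<lambda>ja. ?t (snd w ja)" "?t c"] j by simp
qed

lemma weight_up:
  assumes i: "i \<in> {1..k}" and mu: "mu i > 0"
  shows "weight k n theta lam mu alpha beta u v (up i w) * (real (fst (up i w) i) * mu i)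
       = weight k n theta lam mu alpha beta u v w * (lam i * theta (busy k n w))"
proof -
  define g where "g = (\<lambda>i' x. (lam i'/mu i')^x / fact x)"
  define R where "R = (\<Prod>i'\<in>{1..k}-{i}. g i' (fst w i'))"
  define J where "J = (\<Prod>j=1..n. (alpha j / beta j) ^ (if snd w j = Waiting then 1 else 0)
               * ((alpha j * u j) / (beta j * v j)) ^ (if snd w j = Transmitting then 1 else 0))"
  have b: "busy k n (up i w) = Suc (busy k n w)" using busy_up[OF i] .
  have p1: "(\<Prod>i'=1..k. g i' (fst (up i w) i')) = g i (fst w i + 1) * R"
    unfolding R_def using prod_upd_real[of "{1..k}" i "\<lambda>i'. g i' (fst (up i w) i')" "\<lambda>i'. g i' (fst w i')"] i by (simp add: up_def)
  have p0: "(\<Prod>i'=1..k. g i' (fst w i')) = g i (fst w i) * R"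
    unfolding R_def using prod_upd_real[of "{1..k}" i "\<lambda>i'. g i' (fst w i')" "\<lambda>i'. g i' (fst w i')"] i by simp
  have gg: "g i (fst w i + 1) * (real (fst w i + 1) * mu i) = g i (fst w i) * lam i"
  proof -
    define r where "r = lam i / mu i"
    define x where "x = fst w i"
    have l: "lam i = r * mu i" unfolding r_def using mu by simp
    define y where "y = real (x+1)"
    have y: "y > 0" unfolding y_def by simp
    have fx: "fact x > (0::real)" by simp
    have f: "fact (x+1) = y * (fact x::real)" unfolding y_def by simp
    have "r^(x+1) / (y * fact x) * (y * mu i) = r^x / fact x * (r * mu i)"
      using y fx by (simp add: field_simps)
    then have "r^(x+1) / fact (x+1) * (real (x+1) * mu i) = r^x / fact x * (r * mu i)"
      unfolding f y_def .
    then show ?thesis unfolding g_def r_def[symmetric] x_def[symmetric] by (simp only: l)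
  qed
  have sn: "snd (up i w) = snd w" by (simp add: up_def)
  have w1': "weight k n theta lam mu alpha beta u v (up i w) = (\<Prod>r<busy k n (up i w). theta r) * (\<Prod>i'=1..k. g i' (fst (up i w) i')) * J"
    unfolding weight_def J_def g_def sn by (rule refl)
  have w1: "weight k n theta lam mu alpha beta u v (up i w) = (\<Prod>r<Suc (busy k n w). theta r) * (g i (fst w i + 1) * R) * J"
    unfolding w1' b p1 ..
  have w0: "weight k n theta lam mu alpha beta u v w = (\<Prod>r<busy k n w. theta r) * (g i (fst w i) * R) * J"
  proof -
    have "weight k n theta lam mu alpha beta u v w = (\<Prod>r<busy k n w. theta r) * (\<Prod>i'=1..k. g i' (fst w i')) * J"
      unfolding weight_def J_def g_def by (rule refl)
    then show ?thesis unfolding p0 .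
  qed
  have f: "real (fst (up i w) i) = real (fst w i + 1)" by (simp add: up_def)
  let ?T = "\<Prod>r<busy k n w. theta r"
  have "(\<Prod>r<Suc (busy k n w). theta r) * (g i (fst w i + 1) * R) * J * (real (fst w i + 1) * mu i)
      = (?T * theta (busy k n w) * R * J) * (g i (fst w i + 1) * (real (fst w i + 1) * mu i))"
    by (simp only: prod.lessThan_Suc ac_simps)
  also have "\<dots> = (?T * theta (busy k n w) * R * J) * (g i (fst w i) * lam i)" by (simp only: gg)
  also have "\<dots> = ?T * (g i (fst w i) * R) * J * (lam i * theta (busy k n w))"
    by (simp only: ac_simps)
  finally show ?thesis unfolding w1 w0 f .
qed

definition ga :: "(nat \<Rightarrow> real) \<Rightarrow> (nat \<Rightarrow> real) \<Rightarrow> (nat \<Rightarrow> real) \<Rightarrow> (nat \<Rightarrow> real) \<Rightarrow> nat \<Rightarrow> act \<Rightarrow> real" where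
  "ga alpha beta u v j a = (alpha j / beta j) ^ (if a = Waiting then 1 else 0)
               * ((alpha j * u j) / (beta j * v j)) ^ (if a = Transmitting then 1 else 0)"

lemma weight_setact_gen:
  assumes j: "j \<in> {1..n}"
  shows "\<exists>X R. weight k n theta lam mu alpha beta u v (setact j c w)
      = (\<Prod>r<busy k n (setact j c w). theta r) * X * (ga alpha beta u v j c * R)
    \<and> weight k n theta lam mu alpha beta u v w
      = (\<Prod>r<busy k n w. theta r) * X * (ga alpha beta u v j (snd w j) * R)"
proof -
  define X where "X = (\<Prod>i=1..k. (lam i / mu i) ^ fst w i / fact (fst w i))"
  define R where "R = (\<Prod>j'\<in>{1..n}-{j}. ga alpha beta u v j' (snd w j'))"
  have f: "fst (setact j c w) = fst w" by (simp add: setact_def)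
  have a1: "weight k n theta lam mu alpha beta u v (setact j c w)
      = (\<Prod>r<busy k n (setact j c w). theta r) * X * (\<Prod>j'=1..n. ga alpha beta u v j' (snd (setact j c w) j'))"
    unfolding weight_def X_def ga_def f by (rule refl)
  have a0: "weight k n theta lam mu alpha beta u v w
      = (\<Prod>r<busy k n w. theta r) * X * (\<Prod>j'=1..n. ga alpha beta u v j' (snd w j'))"
    unfolding weight_def X_def ga_def by (rule refl)
  have p1: "(\<Prod>j'=1..n. ga alpha beta u v j' (snd (setact j c w) j')) = ga alpha beta u v j c * R"
    unfolding R_def using prod_upd_real[of "{1..n}" j "\<lambda>j'. ga alpha beta u v j' (snd (setact j c w) j')" "\<lambda>j'. ga alpha beta u v j' (snd w j')"] j
    by (simp add: setact_def)
  have p0: "(\<Prod>j'=1..n. ga alpha beta u v j' (snd w j')) = ga alpha beta u v j (snd w j) * R"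
    unfolding R_def using prod_upd_real[of "{1..n}" j "\<lambda>j'. ga alpha beta u v j' (snd w j')" "\<lambda>j'. ga alpha beta u v j' (snd w j')"] j
    by simp
  show ?thesis using a1 a0 unfolding p1 p0 by blast
qed

lemma weight_IW:
  assumes j: "j \<in> {1..n}" and b: "beta j > 0" and s: "snd w j = Idle"
  shows "weight k n theta lam mu alpha beta u v (setact j Waiting w) * beta j
       = weight k n theta lam mu alpha beta u v w * alpha j"
proof -
  obtain X R where e: "weight k n theta lam mu alpha beta u v (setact j Waiting w)
      = (\<Prod>r<busy k n (setact j Waiting w). theta r) * X * (ga alpha beta u v j Waiting * R)"
    "weight k n theta lam mu alpha beta u v w
      = (\<Prod>r<busy k n w. theta r) * X * (ga alpha beta u v j (snd w j) * R)"
    using weight_setact_gen[OF j] by blast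
  have bb: "busy k n (setact j Waiting w) = busy k n w" using busy_setact[OF j, where c=Waiting and w=w and k=k] s by simp
  show ?thesis unfolding e bb s using b by (simp add: ga_def field_simps)
qed

lemma weight_WT:
  assumes j: "j \<in> {1..n}" and b: "beta j > 0" and vv: "v j > 0" and s: "snd w j = Waiting"
  shows "weight k n theta lam mu alpha beta u v (setact j Transmitting w) * v j
       = weight k n theta lam mu alpha beta u v w * (u j * theta (busy k n w))"
proof -
  obtain X R where e: "weight k n theta lam mu alpha beta u v (setact j Transmitting w)
      = (\<Prod>r<busy k n (setact j Transmitting w). theta r) * X * (ga alpha beta u v j Transmitting * R)"
    "weight k n theta lam mu alpha beta u v w
      = (\<Prod>r<busy k n w. theta r) * X * (ga alpha beta u v j (snd w j) * R)"
    using weight_setact_gen[OF j] by blast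
  have bb: "busy k n (setact j Transmitting w) = Suc (busy k n w)" using busy_setact[OF j, where c=Transmitting and w=w and k=k] s by simp
  show ?thesis unfolding e bb s using b vv by (simp add: ga_def field_simps)
qed



lemma setact_iff: "(snd w j = a \<and> z = setact j b w) \<longleftrightarrow> (snd z j = b \<and> w = setact j a z)"
  by (cases w; cases z) (auto simp: setact_def fun_eq_iff)

lemma db_weight:
  assumes lm: "\<forall>i\<in>{1..k}. lam i > 0 \<and> mu i > 0"
    and ab: "\<forall>j\<in>{1..n}. alpha j > 0 \<and> beta j > 0 \<and> u j > 0 \<and> v j > 0"
  shows "weight k n theta lam mu alpha beta u v w * rate k n theta lam mu alpha beta u v w z
       = weight k n theta lam mu alpha beta u v z * rate k n theta lam mu alpha beta u v z w"
proof -
  let ?W = "weight k n theta lam mu alpha beta u v"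
  define U where "U = (\<lambda>i w z. if z = up i w then lam i * theta (busy k n w) else 0)"
  define D where "D = (\<lambda>i w z. if w = up i z then real (fst w i) * mu i else 0)"
  define A where "A = (\<lambda>j w z. if snd w j = Idle \<and> z = setact j Waiting w then alpha j else 0)"
  define B where "B = (\<lambda>j w z. if snd w j = Waiting \<and> z = setact j Idle w then beta j else 0)"
  define C where "C = (\<lambda>j w z. if snd w j = Waiting \<and> z = setact j Transmitting w then u j * theta (busy k n w) else 0)"
  define E where "E = (\<lambda>j w z. if snd w j = Transmitting \<and> z = setact j Waiting w then v j else 0)"
  have r: "\<And>w z. rate k n theta lam mu alpha beta u v w z = (\<Sum>i=1..k. U i w z + D i w z) + (\<Sum>j=1..n. A j w z + B j w z + C j w z + E j w z)"
    unfolding rate_def U_def D_def A_def B_def C_def E_def by (rule refl)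
  have UD: "?W w * U i w z = ?W z * D i z w" if i: "i \<in> {1..k}" for i w z
  proof (cases "z = up i w")
    case True
    have "mu i > 0" using lm i by auto
    then show ?thesis using weight_up[where k=k and n=n and theta=theta and lam=lam and mu=mu and alpha=alpha and beta=beta and u=u and v=v and w=w, OF i] True
      unfolding U_def D_def by simp
  qed (simp add: U_def D_def)
  have AB: "?W w * A j w z = ?W z * B j z w" if j: "j \<in> {1..n}" for j w z
  proof (cases "snd w j = Idle \<and> z = setact j Waiting w")
    case True
    have "beta j > 0" using ab j by auto
    then show ?thesis using weight_IW[where k=k and n=n and theta=theta and lam=lam and mu=mu and alpha=alpha and beta=beta and u=u and v=v and w=w, OF j] True setact_iff[of w j Idle z Waiting]
      unfolding A_def B_def by simp
  next
    case False
    have nb: "\<not> (snd z j = Waiting \<and> w = setact j Idle z)" using False setact_iff[of w j Idle z Waiting] by blast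
    show ?thesis unfolding A_def B_def if_not_P[OF False] if_not_P[OF nb] by simp
  qed
  have CE: "?W w * C j w z = ?W z * E j z w" if j: "j \<in> {1..n}" for j w z
  proof (cases "snd w j = Waiting \<and> z = setact j Transmitting w")
    case True
    have "beta j > 0" "v j > 0" using ab j by auto
    then show ?thesis using weight_WT[where k=k and n=n and theta=theta and lam=lam and mu=mu and alpha=alpha and beta=beta and u=u and v=v and w=w, OF j] True setact_iff[of w j Waiting z Transmitting]
      unfolding C_def E_def by simp
  next
    case False
    have nb: "\<not> (snd z j = Transmitting \<and> w = setact j Waiting z)" using False setact_iff[of w j Waiting z Transmitting] by blast
    show ?thesis unfolding C_def E_def if_not_P[OF False] if_not_P[OF nb] by simp
  qed
  have "?W w * rate k n theta lam mu alpha beta u v w z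
      = (\<Sum>i=1..k. ?W w * U i w z + ?W w * D i w z) + (\<Sum>j=1..n. ?W w * A j w z + ?W w * B j w z + ?W w * C j w z + ?W w * E j w z)"
    unfolding r by (simp add: sum_distrib_left distrib_left)
  also have "\<dots> = (\<Sum>i=1..k. ?W z * D i z w + ?W z * U i z w) + (\<Sum>j=1..n. ?W z * B j z w + ?W z * A j z w + ?W z * E j z w + ?W z * C j z w)"
  proof -
    have "(\<Sum>i=1..k. ?W w * U i w z + ?W w * D i w z) = (\<Sum>i=1..k. ?W z * D i z w + ?W z * U i z w)"
      by (rule sum.cong[OF refl]) (simp add: UD)
    moreover have "(\<Sum>j=1..n. ?W w * A j w z + ?W w * B j w z + ?W w * C j w z + ?W w * E j w z)
      = (\<Sum>j=1..n. ?W z * B j z w + ?W z * A j z w + ?W z * E j z w + ?W z * C j z w)"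
      by (rule sum.cong[OF refl]) (simp add: AB CE)
    ultimately show ?thesis by simp
  qed
  also have "\<dots> = ?W z * rate k n theta lam mu alpha beta u v z w"
    unfolding r by (simp add: sum_distrib_left algebra_simps)
  finally show ?thesis .
qed



lemma maxprop:
  fixes S :: "'s set" and p pi :: "'s \<Rightarrow> real" and q :: "'s \<Rightarrow> 's \<Rightarrow> real"
  assumes fin: "finite S" and ppos: "\<forall>w\<in>S. p w > 0" and qnn: "\<forall>w\<in>S. \<forall>z\<in>S. q w z \<ge> 0"
    and db: "\<forall>w\<in>S. \<forall>z\<in>S. p w * q w z = p z * q z w"
    and gb: "(\<Sum>w\<in>S-{z}. pi w * q w z) = pi z * (\<Sum>y\<in>S-{z}. q z y)"
    and z: "z \<in> S" and mx: "\<forall>w\<in>S. pi w / p w \<le> pi z / p z"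
    and w: "w \<in> S" "w \<noteq> z" "q w z > 0"
  shows "pi w / p w = pi z / p z"
proof -
  define h where "h = (\<lambda>x. pi x / p x)"
  have pe: "pi x = h x * p x" if "x \<in> S" for x
    using ppos that unfolding h_def by auto
  have l: "(\<Sum>w\<in>S-{z}. pi w * q w z) = (\<Sum>w\<in>S-{z}. h w * (p w * q w z))"
    by (rule sum.cong[OF refl]) (simp add: pe)
  have r: "pi z * (\<Sum>y\<in>S-{z}. q z y) = (\<Sum>y\<in>S-{z}. h z * (p y * q y z))"
    unfolding sum_distrib_left
  proof (rule sum.cong[OF refl])
    fix y assume y: "y \<in> S - {z}"
    have "pi z * q z y = h z * (p z * q z y)" using pe[OF z] by simp
    also have "\<dots> = h z * (p y * q y z)" using db y z by auto
    finally show "pi z * q z y = h z * (p y * q y z)" .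
  qed
  have "(\<Sum>x\<in>S-{z}. (p x * q x z) * (h z - h x)) = (\<Sum>x\<in>S-{z}. h z * (p x * q x z) - h x * (p x * q x z))"
    by (rule sum.cong[OF refl]) (simp add: algebra_simps)
  also have "\<dots> = (\<Sum>x\<in>S-{z}. h z * (p x * q x z)) - (\<Sum>x\<in>S-{z}. h x * (p x * q x z))"
    by (rule sum_subtractf)
  also have "\<dots> = 0" using gb unfolding l r by simp
  finally have "(\<Sum>x\<in>S-{z}. (p x * q x z) * (h z - h x)) = 0" .
  moreover have "\<forall>x\<in>S-{z}. 0 \<le> (p x * q x z) * (h z - h x)"
  proof
    fix x assume x: "x \<in> S - {z}"
    have a: "0 \<le> p x" using ppos x by (auto intro: less_imp_le)
    have b: "0 \<le> q x z" using qnn x z by auto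
    have c: "0 \<le> h z - h x" using mx x unfolding h_def by auto
    show "0 \<le> (p x * q x z) * (h z - h x)" using a b c by simp
  qed
  ultimately have "\<forall>x\<in>S-{z}. (p x * q x z) * (h z - h x) = 0"
    using sum_nonneg_eq_0_iff[of "S-{z}" "\<lambda>x. (p x * q x z) * (h z - h x)"] fin by simp
  then have "(p w * q w z) * (h z - h w) = 0" using w by blast
  moreover have "p w * q w z > 0" using ppos w by auto
  ultimately have "h z - h w = 0" by (metis less_irrefl mult_eq_0_iff)
  then show ?thesis unfolding h_def by simp
qed

definition lev :: "act \<Rightarrow> nat" where
  "lev a = (case a of Idle \<Rightarrow> 0 | Waiting \<Rightarrow> 1 | Transmitting \<Rightarrow> 2)"

definition dd :: "nat \<Rightarrow> nat \<Rightarrow> state \<Rightarrow> nat" where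
  "dd k n w = (\<Sum>i=1..k. fst w i) + (\<Sum>j=1..n. lev (snd w j))"

lemma dd_up: "i \<in> {1..k} \<Longrightarrow> dd k n (up i w) = Suc (dd k n w)"
  unfolding dd_def up_def using sum_upd_nat[of "{1..k}" i "fst w" "fst w i + 1"] by simp

lemma dd_setact: "j \<in> {1..n} \<Longrightarrow> dd k n (setact j c w) + lev (snd w j) = dd k n w + lev c"
proof -
  assume j: "j \<in> {1..n}"
  have e: "(\<lambda>ja. lev (snd (setact j c w) ja)) = (\<lambda>ja. lev (snd w ja))(j := lev c)"
    by (auto simp: setact_def)
  have f: "fst (setact j c w) = fst w" by (simp add: setact_def)
  show ?thesis unfolding dd_def f e
    using sum_upd_nat[of "{1..n}" j "\<lambda>ja. lev (snd w ja)" "lev c"] j by simp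
qed

lemma act_UNIV: "(UNIV :: act set) = {Idle, Waiting, Transmitting}"
  using act.exhaust by auto

lemma fst_le_busy: "i \<in> {1..k} \<Longrightarrow> fst w i \<le> busy k n w"
proof -
  assume i: "i \<in> {1..k}"
  have "fst w i \<le> (\<Sum>i=1..k. fst w i)" by (rule member_le_sum) (use i in auto)
  then show ?thesis unfolding busy_def by simp
qed

lemma finite_states: "finite (states m k n)"
proof -
  let ?F = "{f. \<forall>x. (x \<in> {1..k} \<longrightarrow> f x \<in> {0..m}) \<and> (x \<notin> {1..k} \<longrightarrow> f x = 0)}"
  let ?G = "{g. \<forall>x. (x \<in> {1..n} \<longrightarrow> g x \<in> (UNIV::act set)) \<and> (x \<notin> {1..n} \<longrightarrow> g x = Idle)}"
  have "finite ?F" by (rule finite_set_of_finite_funs) auto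
  moreover have "finite ?G" by (rule finite_set_of_finite_funs) (auto simp: act_UNIV)
  moreover have "states m k n \<subseteq> ?F \<times> ?G"
  proof
    fix w assume w: "w \<in> states m k n"
    have bm: "busy k n w \<le> m" and c1: "\<forall>i. i \<notin> {1..k} \<longrightarrow> fst w i = 0"
      and c2: "\<forall>j. j \<notin> {1..n} \<longrightarrow> snd w j = Idle"
      using w unfolding states_def by auto
    have "fst w i \<le> m" if i: "i \<in> {1..k}" for i
      by (rule le_trans[OF fst_le_busy[OF i] bm])
    then have "fst w \<in> ?F" using c1 by auto
    moreover have "snd w \<in> ?G" using c2 by auto
    ultimately show "w \<in> ?F \<times> ?G" by (simp add: mem_Times_iff)
  qed
  ultimately show ?thesis by (rule finite_subset[rotated, OF finite_cartesian_product])
qed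



context
  fixes m k n :: nat and lam mu alpha beta u v theta :: "nat \<Rightarrow> real"
  assumes lm: "\<forall>i\<in>{1..k}. lam i > 0 \<and> mu i > 0"
    and ab: "\<forall>j\<in>{1..n}. alpha j > 0 \<and> beta j > 0 \<and> u j > 0 \<and> v j > 0"
    and th: "\<forall>b\<in>{0..m}. 0 \<le> theta b \<and> theta b \<le> 1"
    and thp: "\<forall>b\<in>{0..<m}. theta b > 0"
begin

lemma weight_pos: "w \<in> states m k n \<Longrightarrow> weight k n theta lam mu alpha beta u v w > 0"
proof -
  assume w: "w \<in> states m k n"
  have bm: "busy k n w \<le> m" using w unfolding states_def by auto
  have t: "(\<Prod>r<busy k n w. theta r) > 0"
  proof (rule prod_pos)
    fix r assume "r \<in> {..<busy k n w}"
    then have "r \<in> {0..<m}" using bm by auto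
    then show "theta r > 0" using thp by auto
  qed
  have x: "(\<Prod>i=1..k. (lam i / mu i) ^ fst w i / fact (fst w i)) > 0"
  proof (rule prod_pos)
    fix i assume "i \<in> {1..k}"
    then have "lam i > 0" "mu i > 0" using lm by auto
    then show "(lam i / mu i) ^ fst w i / fact (fst w i) > 0" by simp
  qed
  have j: "(\<Prod>j=1..n. (alpha j / beta j) ^ (if snd w j = Waiting then 1 else 0)
               * ((alpha j * u j) / (beta j * v j)) ^ (if snd w j = Transmitting then 1 else 0)) > 0"
  proof (rule prod_pos)
    fix j assume "j \<in> {1..n}"
    then have "alpha j > 0" "beta j > 0" "u j > 0" "v j > 0" using ab by auto
    then show "(alpha j / beta j) ^ (if snd w j = Waiting then 1 else 0)
               * ((alpha j * u j) / (beta j * v j)) ^ (if snd w j = Transmitting then 1 else 0) > 0" by simp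
  qed
  show ?thesis unfolding weight_def using t x j by simp
qed

lemma rate_parts:
  assumes w: "w \<in> states m k n"
  shows "\<forall>i\<in>{1..k}. 0 \<le> (if z = up i w then lam i * theta (busy k n w) else 0)
                   \<and> 0 \<le> (if w = up i z then real (fst w i) * mu i else 0)"
    and "\<forall>j\<in>{1..n}. 0 \<le> (if snd w j = Idle \<and> z = setact j Waiting w then alpha j else 0)
      \<and> 0 \<le> (if snd w j = Waiting \<and> z = setact j Idle w then beta j else 0)
      \<and> 0 \<le> (if snd w j = Waiting \<and> z = setact j Transmitting w then u j * theta (busy k n w) else 0)
      \<and> 0 \<le> (if snd w j = Transmitting \<and> z = setact j Waiting w then v j else 0)"
proof -
  have bm: "busy k n w \<le> m" using w unfolding states_def by auto
  then have t: "0 \<le> theta (busy k n w)" using th by auto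
  show "\<forall>i\<in>{1..k}. 0 \<le> (if z = up i w then lam i * theta (busy k n w) else 0)
                   \<and> 0 \<le> (if w = up i z then real (fst w i) * mu i else 0)"
    using lm t by (auto intro: less_imp_le)
  show "\<forall>j\<in>{1..n}. 0 \<le> (if snd w j = Idle \<and> z = setact j Waiting w then alpha j else 0)
      \<and> 0 \<le> (if snd w j = Waiting \<and> z = setact j Idle w then beta j else 0)
      \<and> 0 \<le> (if snd w j = Waiting \<and> z = setact j Transmitting w then u j * theta (busy k n w) else 0)
      \<and> 0 \<le> (if snd w j = Transmitting \<and> z = setact j Waiting w then v j else 0)"
    using ab t by (auto intro: less_imp_le)
qed

lemma rate_nonneg: "w \<in> states m k n \<Longrightarrow> 0 \<le> rate k n theta lam mu alpha beta u v w z"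
  using rate_parts[of w z] unfolding rate_def
  by (intro add_nonneg_nonneg sum_nonneg) auto

lemma rate_ge_D:
  assumes w: "w \<in> states m k n" and i: "i \<in> {1..k}"
  shows "(if w = up i z then real (fst w i) * mu i else 0) \<le> rate k n theta lam mu alpha beta u v w z"
proof -
  let ?f = "\<lambda>i. (if z = up i w then lam i * theta (busy k n w) else 0)
              + (if w = up i z then real (fst w i) * mu i else 0)"
  let ?g = "\<lambda>j. (if snd w j = Idle \<and> z = setact j Waiting w then alpha j else 0)
      + (if snd w j = Waiting \<and> z = setact j Idle w then beta j else 0)
      + (if snd w j = Waiting \<and> z = setact j Transmitting w then u j * theta (busy k n w) else 0)
      + (if snd w j = Transmitting \<and> z = setact j Waiting w then v j else 0)"
  have r: "rate k n theta lam mu alpha beta u v w z = sum ?f {1..k} + sum ?g {1..n}"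
    unfolding rate_def by (rule refl)
  have "?f i \<le> sum ?f {1..k}" by (rule member_le_sum) (use i rate_parts(1)[OF w, of z] in auto)
  moreover have "0 \<le> sum ?g {1..n}" by (rule sum_nonneg) (use rate_parts(2)[OF w, of z] in auto)
  moreover have "0 \<le> (if z = up i w then lam i * theta (busy k n w) else 0)" using rate_parts(1)[OF w, of z] i by blast
  ultimately show ?thesis unfolding r by linarith
qed

lemma rate_ge_J:
  assumes w: "w \<in> states m k n" and j: "j \<in> {1..n}"
  shows "(if snd w j = Waiting \<and> z = setact j Idle w then beta j else 0)
       + (if snd w j = Transmitting \<and> z = setact j Waiting w then v j else 0) \<le> rate k n theta lam mu alpha beta u v w z"
proof -
  let ?f = "\<lambda>i. (if z = up i w then lam i * theta (busy k n w) else 0)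
              + (if w = up i z then real (fst w i) * mu i else 0)"
  let ?g = "\<lambda>j. (if snd w j = Idle \<and> z = setact j Waiting w then alpha j else 0)
      + (if snd w j = Waiting \<and> z = setact j Idle w then beta j else 0)
      + (if snd w j = Waiting \<and> z = setact j Transmitting w then u j * theta (busy k n w) else 0)
      + (if snd w j = Transmitting \<and> z = setact j Waiting w then v j else 0)"
  have r: "rate k n theta lam mu alpha beta u v w z = sum ?f {1..k} + sum ?g {1..n}"
    unfolding rate_def by (rule refl)
  have "?g j \<le> sum ?g {1..n}" by (rule member_le_sum) (use j rate_parts(2)[OF w, of z] in auto)
  moreover have "0 \<le> sum ?f {1..k}" by (rule sum_nonneg) (use rate_parts(1)[OF w, of z] in auto)
  moreover have "0 \<le> (if snd w j = Idle \<and> z = setact j Waiting w then alpha j else 0)"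
    "0 \<le> (if snd w j = Waiting \<and> z = setact j Transmitting w then u j * theta (busy k n w) else 0)"
    using rate_parts(2)[OF w, of z] j by blast+
  ultimately show ?thesis unfolding r by linarith
qed


lemma canon:
  assumes w: "w \<in> states m k n"
  shows "\<forall>i. i \<notin> {1..k} \<longrightarrow> fst w i = 0" "\<forall>j. j \<notin> {1..n} \<longrightarrow> snd w j = Idle" "busy k n w \<le> m"
  using w unfolding states_def by auto

lemma step:
  assumes w: "w \<in> states m k n" and d: "dd k n w > 0"
  shows "\<exists>y\<in>states m k n. dd k n y < dd k n w \<and> rate k n theta lam mu alpha beta u v w y > 0"
proof (cases "\<exists>i\<in>{1..k}. fst w i > 0")
  case True
  then obtain i where i: "i \<in> {1..k}" and xi: "fst w i > 0" by blast
  define y where "y = ((fst w)(i := fst w i - 1), snd w)"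
  have wy: "w = up i y" using xi by (cases w) (auto simp: y_def up_def fun_eq_iff)
  have b: "busy k n w = Suc (busy k n y)" unfolding wy by (rule busy_up[OF i])
  have yS: "y \<in> states m k n"
    using canon[OF w] b i unfolding states_def by (auto simp: y_def)
  have dy: "dd k n w = Suc (dd k n y)" unfolding wy by (rule dd_up[OF i])
  have "real (fst w i) * mu i > 0" using xi lm i by auto
  moreover have "(if w = up i y then real (fst w i) * mu i else 0) \<le> rate k n theta lam mu alpha beta u v w y"
    by (rule rate_ge_D[OF w i])
  ultimately show ?thesis using yS dy wy by (intro bexI[of _ y]) auto
next
  case False
  then have x0: "\<forall>i\<in>{1..k}. fst w i = 0" by auto
  then have "(\<Sum>i=1..k. fst w i) = 0" by simp
  then have "(\<Sum>j=1..n. lev (snd w j)) > 0" using d unfolding dd_def by simp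
  have "\<exists>j\<in>{1..n}. lev (snd w j) > 0"
  proof (rule ccontr)
    assume "\<not> ?thesis"
    then have "\<forall>j\<in>{1..n}. lev (snd w j) = 0" by auto
    then have "(\<Sum>j=1..n. lev (snd w j)) = 0" by simp
    with \<open>(\<Sum>j=1..n. lev (snd w j)) > 0\<close> show False by simp
  qed
  then obtain j where j: "j \<in> {1..n}" and lj: "lev (snd w j) > 0" by blast
  have "snd w j = Waiting \<or> snd w j = Transmitting" using lj by (cases "snd w j") (auto simp: lev_def)
  then show ?thesis
  proof
    assume s: "snd w j = Waiting"
    define y where "y = setact j Idle w"
    have b: "busy k n y = busy k n w" using busy_setact[where k=k and n=n and c=Idle and w=w, OF j] s unfolding y_def by simp
    have dy: "dd k n y + 1 = dd k n w" using dd_setact[where k=k and n=n and c=Idle and w=w, OF j] s unfolding y_def by (simp add: lev_def)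
    have yS: "y \<in> states m k n"
      using canon[OF w] b j unfolding states_def by (auto simp: y_def setact_def)
    have "beta j > 0" using ab j by auto
    moreover have "(if snd w j = Waiting \<and> y = setact j Idle w then beta j else 0)
       + (if snd w j = Transmitting \<and> y = setact j Waiting w then v j else 0) \<le> rate k n theta lam mu alpha beta u v w y"
      by (rule rate_ge_J[OF w j])
    ultimately show ?thesis using yS dy s unfolding y_def by (intro bexI[of _ "setact j Idle w"]) auto
  next
    assume s: "snd w j = Transmitting"
    define y where "y = setact j Waiting w"
    have b: "busy k n y + 1 = busy k n w" using busy_setact[where k=k and n=n and c=Waiting and w=w, OF j] s unfolding y_def by simp
    have dy: "dd k n y + 1 = dd k n w" using dd_setact[where k=k and n=n and c=Waiting and w=w, OF j] s unfolding y_def by (simp add: lev_def)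
    have yS: "y \<in> states m k n"
      using canon[OF w] b j unfolding states_def by (auto simp: y_def setact_def)
    have "v j > 0" using ab j by auto
    moreover have "(if snd w j = Waiting \<and> y = setact j Idle w then beta j else 0)
       + (if snd w j = Transmitting \<and> y = setact j Waiting w then v j else 0) \<le> rate k n theta lam mu alpha beta u v w y"
      by (rule rate_ge_J[OF w j])
    ultimately show ?thesis using yS dy s unfolding y_def by (intro bexI[of _ "setact j Waiting w"]) auto
  qed
qed

lemma dd0:
  assumes w: "w \<in> states m k n" and d: "dd k n w = 0"
  shows "w = (\<lambda>_. 0, \<lambda>_. Idle)"
proof -
  have s1: "(\<Sum>i=1..k. fst w i) = 0" and s2: "(\<Sum>j=1..n. lev (snd w j)) = 0" using d unfolding dd_def by auto
  have a: "fst w i = 0" for i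
  proof (cases "i \<in> {1..k}")
    case True then show ?thesis using s1 by simp
  next
    case False then show ?thesis using canon(1)[OF w] by auto
  qed
  have b: "snd w j = Idle" for j
  proof (cases "j \<in> {1..n}")
    case True
    then have "lev (snd w j) = 0" using s2 by simp
    then show ?thesis by (cases "snd w j") (auto simp: lev_def)
  next
    case False then show ?thesis using canon(2)[OF w] by auto
  qed
  show ?thesis using a b by (cases w) (auto simp: fun_eq_iff)
qed

lemma propagate:
  assumes P: "\<forall>w\<in>states m k n. \<forall>y\<in>states m k n. rate k n theta lam mu alpha beta u v w y > 0 \<longrightarrow> (Q w \<longleftrightarrow> Q y)"
  shows "\<forall>w\<in>states m k n. Q w \<longleftrightarrow> Q (\<lambda>_. 0, \<lambda>_. Idle)"
proof -
  have "\<forall>w. w \<in> states m k n \<longrightarrow> dd k n w = N \<longrightarrow> (Q w \<longleftrightarrow> Q (\<lambda>_. 0, \<lambda>_. Idle))" for N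
  proof (induction N rule: less_induct)
    case (less N)
    show ?case
    proof (intro allI impI)
      fix w assume w: "w \<in> states m k n" and dN: "dd k n w = N"
      show "Q w \<longleftrightarrow> Q (\<lambda>_. 0, \<lambda>_. Idle)"
      proof (cases "N = 0")
        case True then show ?thesis using dd0[OF w] dN by simp
      next
        case False
        then obtain y where y: "y \<in> states m k n" "dd k n y < dd k n w" "rate k n theta lam mu alpha beta u v w y > 0"
          using step[OF w] dN by auto
        have lt: "dd k n y < N" using y dN by simp
        have "Q y \<longleftrightarrow> Q (\<lambda>_. 0, \<lambda>_. Idle)" using less.IH[OF lt] y(1) by blast
        moreover have "Q w \<longleftrightarrow> Q y" using P w y by blast
        ultimately show ?thesis by simp
      qed
    qed
  qed
  then show ?thesis by blast
qed

end



theorem theorem2: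
  fixes m k n :: nat
    and lam mu alpha beta u v theta :: "nat \<Rightarrow> real"
  assumes "m \<ge> 1" "k \<ge> 1" "n \<ge> 1"
    and "\<forall>i\<in>{1..k}. lam i > 0 \<and> mu i > 0"
    and "\<forall>j\<in>{1..n}. alpha j > 0 \<and> beta j > 0 \<and> u j > 0 \<and> v j > 0"
    and "\<forall>b\<in>{0..m}. 0 \<le> theta b \<and> theta b \<le> 1"
    and "\<forall>b\<in>{0..<m}. theta b > 0"
    and "theta m = 0"
  defines "S \<equiv> states m k n"
    and "q \<equiv> rate k n theta lam mu alpha beta u v"
    and "p \<equiv> (\<lambda>w. (1 / (\<Sum>y\<in>states m k n. weight k n theta lam mu alpha beta u v y))
                      * weight k n theta lam mu alpha beta u v w)"
  shows "reversible_ctmc S q \<and> is_pmf_on S p \<and> detailed_balance S q p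
         \<and> (\<forall>\<pi>. stationary_dist S q \<pi> \<longleftrightarrow> (\<forall>w\<in>S. \<pi> w = p w))"
proof -
  note A = assms(4) assms(5) assms(6) assms(7)
  let ?W = "weight k n theta lam mu alpha beta u v"
  define Z where "Z = (\<Sum>y\<in>states m k n. ?W y)"
  have pZ: "p = (\<lambda>w. (1 / Z) * ?W w)" unfolding p_def Z_def ..
  have fin: "finite S" unfolding S_def by (rule finite_states)
  have zsS: "(\<lambda>_. 0, \<lambda>_. Idle) \<in> S" unfolding S_def states_def busy_def by simp
  have Wpos: "\<forall>w\<in>S. ?W w > 0" unfolding S_def using weight_pos[OF A] by blast
  have Zpos: "Z > 0" unfolding Z_def S_def[symmetric]
    by (rule sum_pos) (use fin zsS Wpos in auto)
  have ppos: "\<forall>w\<in>S. p w > 0" unfolding pZ using Zpos Wpos by auto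
  have "(\<Sum>w\<in>S. p w) = (1 / Z) * Z" unfolding pZ S_def Z_def by (rule sum_distrib_left[symmetric])
  then have psum: "(\<Sum>w\<in>S. p w) = 1" using Zpos by simp
  have pmf: "is_pmf_on S p" unfolding is_pmf_on_def using ppos psum by (auto intro: less_imp_le)
  have dbp: "p w * q w z = p z * q z w" for w z
    unfolding pZ q_def using db_weight[OF assms(4) assms(5), of theta w z] by (simp add: ac_simps)
  have DB: "detailed_balance S q p" unfolding detailed_balance_def using dbp by blast
  have qnn: "\<forall>w\<in>S. \<forall>z\<in>S. q w z \<ge> 0" unfolding q_def S_def using rate_nonneg[OF A] by blast
  have stat: "stationary_dist S q pi \<longleftrightarrow> (\<forall>w\<in>S. pi w = p w)" for pi
  proof
    assume eq: "\<forall>w\<in>S. pi w = p w"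
    have "is_pmf_on S pi" using pmf eq unfolding is_pmf_on_def by (metis (no_types, lifting) sum.cong)
    moreover have "(\<Sum>w\<in>S-{z}. pi w * q w z) = pi z * (\<Sum>y\<in>S-{z}. q z y)" if z: "z \<in> S" for z
    proof -
      have "(\<Sum>w\<in>S-{z}. pi w * q w z) = (\<Sum>w\<in>S-{z}. p z * q z w)"
        by (rule sum.cong[OF refl]) (use eq dbp in auto)
      also have "\<dots> = pi z * (\<Sum>y\<in>S-{z}. q z y)" using eq z by (simp add: sum_distrib_left)
      finally show ?thesis .
    qed
    ultimately show "stationary_dist S q pi" unfolding stationary_dist_def by blast
  next
    assume st: "stationary_dist S q pi"
    then have pmfpi: "is_pmf_on S pi"
      and gb: "\<forall>z\<in>S. (\<Sum>w\<in>S-{z}. pi w * q w z) = pi z * (\<Sum>y\<in>S-{z}. q z y)"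
      unfolding stationary_dist_def by auto
    define h where "h = (\<lambda>x. pi x / p x)"
    define M where "M = Max (h ` S)"
    have Min: "M \<in> h ` S" unfolding M_def using fin zsS by (intro Max_in) auto
    then obtain z0 where z0: "z0 \<in> S" "h z0 = M" by auto
    have mx: "\<forall>w\<in>S. h w \<le> M" unfolding M_def using fin by auto
    have dbS: "\<forall>w\<in>S. \<forall>z\<in>S. p w * q w z = p z * q z w" using dbp by blast
    have P: "\<forall>w\<in>S. \<forall>y\<in>S. rate k n theta lam mu alpha beta u v w y > 0 \<longrightarrow> (h w = M \<longleftrightarrow> h y = M)"
    proof (intro ballI impI)
      fix w y assume w: "w \<in> S" and y: "y \<in> S" and r: "rate k n theta lam mu alpha beta u v w y > 0"
      show "h w = M \<longleftrightarrow> h y = M"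
      proof (cases "w = y")
        case True then show ?thesis by simp
      next
        case False
        have qwy: "q w y > 0" using r unfolding q_def .
        have "p w > 0" using ppos w by blast
        then have "p w * q w y > 0" using qwy by simp
        then have "p y * q y w > 0" using dbp[of w y] by simp
        moreover have "p y > 0" using ppos y by blast
        ultimately have qyw: "q y w > 0" by (simp add: zero_less_mult_iff)
        show ?thesis
        proof
          assume hw: "h w = M"
          have "pi y / p y = pi w / p w"
            by (rule maxprop[OF fin ppos qnn dbS gb[rule_format, OF w] w])
               (use mx hw y False qyw in \<open>auto simp: h_def\<close>)
          then show "h y = M" using hw unfolding h_def by simp
        next
          assume hy: "h y = M"
          have "pi w / p w = pi y / p y"
            by (rule maxprop[OF fin ppos qnn dbS gb[rule_format, OF y] y])
               (use mx hy w False qwy in \<open>auto simp: h_def\<close>)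
          then show "h w = M" using hy unfolding h_def by simp
        qed
      qed
    qed
    have all: "\<forall>w\<in>S. h w = M \<longleftrightarrow> h (\<lambda>_. 0, \<lambda>_. Idle) = M"
      using propagate[OF A P[unfolded S_def]] unfolding S_def .
    have hM: "\<forall>w\<in>S. h w = M" using all z0 by blast
    have pie: "\<forall>w\<in>S. pi w = M * p w"
    proof
      fix w assume w: "w \<in> S"
      have "p w > 0" using ppos w by blast
      moreover have "pi w / p w = M" using hM w unfolding h_def by blast
      ultimately show "pi w = M * p w" by (simp add: field_simps)
    qed
    have "1 = (\<Sum>w\<in>S. pi w)" using pmfpi unfolding is_pmf_on_def by simp
    also have "\<dots> = (\<Sum>w\<in>S. M * p w)" using pie by (intro sum.cong) auto
    also have "\<dots> = M" using psum by (simp add: sum_distrib_left[symmetric])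
    finally have "M = 1" by simp
    then show "\<forall>w\<in>S. pi w = p w" using pie by simp
  qed
  show ?thesis unfolding reversible_ctmc_def using pmf DB stat by blast
qed

end
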